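(* For the generalized coin-tossing process with $p=\tfrac12$ (fair coins) and OPs of length $m=3$, $\mathbf p=(\tfrac14,\tfrac18,\tfrac18,\tfrac18,\tfrac18,\tfrac14)^\top$ and $$\Sigma=\frac1{64}\begin{pmatrix}20&-2&-2&-2&-2&-12\\-2&5&1&-3&1&-2\\-2&1&5&1&-3&-2\\-2&-3&1&5&1&-2\\-2&1&-3&1&5&-2\\-12&-2&-2&-2&-2&20\end{pmatrix}.$$
   Context: Generalized coin-tossing (GCT) process with parameter $p\in(0,1)$, $q=1-p$: a random strict total order on objects $(X_t)_{t\in\mathbb Z}$ defined from mutually independent Bernoulli variables $\xi_{s,t}$, $s<t$, with $\mathbb P(\xi_{s,t}=1)=p$, recursively in $t-s$: if $t-s=1$, $X_s<X_t$ iff $\xi_{s,t}=1$; if $t-s\ge2$ and there is $r\in(s,t)$ with $X_s<X_r<X_t$ then $X_s<X_t$; if there is $r\in(s,t)$ with $X_s>X_r>X_t$ then $X_s>X_t$; otherwise $X_s<X_t$ iff $\xi_{s,t}=1$. $\Pi_t$ is the permutation in $S_3$ giving the ranks of $(X_t,X_{t+1},X_{t+2})$; OPs in lexicographic order are $\pi_1=(1,2,3)$, $\pi_2=(1,3,2)$, $\pi_3=(2,1,3)$, $\pi_4=(2,3,1)$, $\pi_5=(3,1,2)$, $\pi_6=(3,2,1)$. $p_i=\mathbb P(\Pi_0=\pi_i)$, $p_{ij}(k)=\mathbb P(\Pi_0=\pi_i,\Pi_k=\pi_j)$, $\Sigma=(\sigma_{ij})$ with $\sigma_{ij}=p_i(\delta_{ij}-p_j)+\sum_{k=1}^\infty\big(p_{ij}(k)+p_{ji}(k)-2p_ip_j\big)$.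 *)

theory Defs
  imports "HOL-Probability.Probability"
begin

text \<open>Generalized coin-tossing (GCT) process. The coins are
  xi (s,t) for s < t (True means xi = 1). gct_lt xi s t (for s < t) says X_s < X_t.\<close>

function gct_lt :: "(nat \<times> nat \<Rightarrow> bool) \<Rightarrow> nat \<Rightarrow> nat \<Rightarrow> bool" where
  "gct_lt xi s t =
     (if t \<le> s then False
      else if t = Suc s then xi (s, t)
      else if (\<exists>r\<in>{s<..<t}. gct_lt xi s r \<and> gct_lt xi r t) then True
      else if (\<exists>r\<in>{s<..<t}. \<not> gct_lt xi s r \<and> \<not> gct_lt xi r t) then False
      else xi (s, t))"
  by pat_completeness auto
termination
  by (relation "Wellfounded.measure (\<lambda>(xi, s, t). t - s)") auto

definition gct_less :: "(nat \<times> nat \<Rightarrow> bool) \<Rightarrow> nat \<Rightarrow> nat \<Rightarrow> bool" where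
  "gct_less xi a b =
     (if a < b then gct_lt xi a b else if b < a then \<not> gct_lt xi b a else False)"

definition gct_op :: "(nat \<times> nat \<Rightarrow> bool) \<Rightarrow> nat \<Rightarrow> nat list" where
  "gct_op xi t = map (\<lambda>i. 1 + card {j\<in>{0..<3::nat}. gct_less xi (t + j) (t + i)}) [0..<3]"

definition op_pi :: "nat \<Rightarrow> nat list" where
  "op_pi i = [[1,2,3],[1,3,2],[2,1,3],[2,3,1],[3,1,2],[3,2,1]] ! (i - 1)"

text \<open>Joint law of the coins xi (s,t), 0 \<le> s < t < n: independent Bernoulli(p).
  Events about positions 0..n-1 depend only on these coins.\<close>
definition coins :: "real \<Rightarrow> nat \<Rightarrow> (nat \<times> nat \<Rightarrow> bool) pmf" where
  "coins p n = Pi_pmf {(s, t). s < t \<and> t < n} False (\<lambda>_. bernoulli_pmf p)"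

definition gct_p :: "real \<Rightarrow> nat \<Rightarrow> real" where
  "gct_p p i = measure_pmf.prob (coins p 3) {xi. gct_op xi 0 = op_pi i}"

definition gct_pp :: "real \<Rightarrow> nat \<Rightarrow> nat \<Rightarrow> nat \<Rightarrow> real" where
  "gct_pp p i j k = measure_pmf.prob (coins p (k + 3))
      {xi. gct_op xi 0 = op_pi i \<and> gct_op xi k = op_pi j}"

definition gct_cov_term :: "real \<Rightarrow> nat \<Rightarrow> nat \<Rightarrow> nat \<Rightarrow> real" where
  "gct_cov_term p i j k = gct_pp p i j k + gct_pp p j i k - 2 * gct_p p i * gct_p p j"

definition gct_sigma :: "real \<Rightarrow> nat \<Rightarrow> nat \<Rightarrow> real" where
  "gct_sigma p i j = gct_p p i * ((if i = j then 1 else 0) - gct_p p j)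
      + (\<Sum>k. gct_cov_term p i j (Suc k))"

end

theory Submission
  imports Defs
begin

declare gct_lt.simps[simp del]


lemma card3: "card {j\<in>{0..<3::nat}. P j} = of_bool (P 0) + of_bool (P 1) + of_bool (P 2)"
proof -
  have "card {j\<in>{0..<3::nat}. P j} = (\<Sum>j\<in>{0..<3::nat}. if P j then 1 else 0)"
    by (simp add: sum.If_cases Int_def conj_commute)
  also have "\<dots> = of_bool (P 0) + of_bool (P 1) + of_bool (P 2)"
    by (simp add: eval_nat_numeral)
  finally show ?thesis .
qed

lemma lt1: "gct_lt xi s (Suc s) = xi (s, Suc s)"
  by (subst gct_lt.simps) simp

lemma lt2: "gct_lt xi s (Suc (Suc s)) =
  (if xi (s, Suc s) = xi (Suc s, Suc (Suc s)) then xi (s, Suc s) else xi (s, Suc (Suc s)))"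
proof -
  have e: "{s<..<Suc (Suc s)} = {Suc s}" by auto
  show ?thesis by (subst gct_lt.simps) (simp add: e lt1)
qed

lemma gct_op_closed: "gct_op xi t =
  (let u = xi (t, Suc t); v = xi (Suc t, Suc (Suc t));
       w = (if u = v then u else xi (t, Suc (Suc t))) in
   [1 + of_bool (\<not> u) + of_bool (\<not> w), 1 + of_bool u + of_bool (\<not> v), 1 + of_bool w + of_bool v])"
proof -
  have e: "[0..<3] = [0,1,2::nat]" by (simp add: upt_rec)
  show ?thesis
    unfolding gct_op_def e card3
    by (simp add: gct_less_def lt1 lt2 Let_def eval_nat_numeral)
qed



lemma prob_peel:
  assumes "finite A" "x \<in> A"
  shows "measure_pmf.prob (Pi_pmf A False (\<lambda>_. bernoulli_pmf (1/2))) S =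
    (measure_pmf.prob (Pi_pmf (A - {x}) False (\<lambda>_. bernoulli_pmf (1/2))) {f. f(x:=True) \<in> S} +
     measure_pmf.prob (Pi_pmf (A - {x}) False (\<lambda>_. bernoulli_pmf (1/2))) {f. f(x:=False) \<in> S}) / 2"
proof -
  let ?P = "Pi_pmf (A - {x}) False (\<lambda>_. bernoulli_pmf (1/2))"
  have M: "Pi_pmf A False (\<lambda>_. bernoulli_pmf (1/2)) =
     bind_pmf (bernoulli_pmf (1/2)) (\<lambda>y. map_pmf (\<lambda>f. f(x:=y)) ?P)"
    using Pi_pmf_insert'[of "A-{x}" x False "\<lambda>_. bernoulli_pmf (1/2)"] insert_Diff[OF assms(2)] assms(1)
    by (simp add: map_pmf_def)
  have "ennreal (measure_pmf.prob (Pi_pmf A False (\<lambda>_. bernoulli_pmf (1/2))) S)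
      = emeasure (measure_pmf (Pi_pmf A False (\<lambda>_. bernoulli_pmf (1/2)))) S"
    by (simp add: measure_pmf.emeasure_eq_measure)
  also have "\<dots> = emeasure (measure_pmf ?P) {f. f(x:=True) \<in> S} * ennreal (1/2) +
                  emeasure (measure_pmf ?P) {f. f(x:=False) \<in> S} * ennreal (1/2)"
    unfolding M by (simp add: emeasure_map_pmf vimage_def)
  also have "\<dots> = ennreal (measure_pmf.prob ?P {f. f(x:=True) \<in> S}) * ennreal (1/2) +
      ennreal (measure_pmf.prob ?P {f. f(x:=False) \<in> S}) * ennreal (1/2)"
    by (simp only: measure_pmf.emeasure_eq_measure)
  also have "\<dots> = ennreal (measure_pmf.prob ?P {f. f(x:=True) \<in> S} * (1/2)) +
      ennreal (measure_pmf.prob ?P {f. f(x:=False) \<in> S} * (1/2))"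
    by (simp only: ennreal_mult[symmetric] measure_nonneg divide_nonneg_nonneg zero_le_one zero_le_numeral)
  also have "\<dots> = ennreal (measure_pmf.prob ?P {f. f(x:=True) \<in> S} * (1/2) +
      measure_pmf.prob ?P {f. f(x:=False) \<in> S} * (1/2))"
    by (rule ennreal_plus[symmetric]) (simp_all)
  finally have "measure_pmf.prob (Pi_pmf A False (\<lambda>_. bernoulli_pmf (1/2))) S =
      measure_pmf.prob ?P {f. f(x:=True) \<in> S} * (1/2) + measure_pmf.prob ?P {f. f(x:=False) \<in> S} * (1/2)"
    by (subst (asm) ennreal_inj) simp_all
  then show ?thesis by simp
qed



lemma prob_ins:
  assumes "finite A" "x \<notin> A"
  shows "measure_pmf.prob (Pi_pmf (insert x A) False (\<lambda>_. bernoulli_pmf (1/2))) S =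
    (measure_pmf.prob (Pi_pmf A False (\<lambda>_. bernoulli_pmf (1/2))) {f. f(x:=True) \<in> S} +
     measure_pmf.prob (Pi_pmf A False (\<lambda>_. bernoulli_pmf (1/2))) {f. f(x:=False) \<in> S}) / 2"
  using prob_peel[of "insert x A" x S] assms by simp

lemma D3: "{(s,t). s<t \<and> t<(3::nat)} = {(0,1),(1,2),(0,2)}" by auto

lemma six: "(i::nat) \<in> {1..6} \<Longrightarrow> i = 1 \<or> i = 2 \<or> i = 3 \<or> i = 4 \<or> i = 5 \<or> i = 6" by auto

lemma gp: "i \<in> {1..6} \<Longrightarrow> gct_p (1/2) i = [1/4, 1/8, 1/8, 1/8, 1/8, 1/4] ! (i - 1)"
  unfolding gct_p_def coins_def D3
  by (drule six, elim disjE; simp add: prob_ins gct_op_closed op_pi_def Let_def)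



lemma prob_UNIV': "measure_pmf.prob M UNIV = 1"
  using measure_pmf.prob_space[of M] by simp

lemma prob_conj_const: "measure_pmf.prob M {f. P \<and> X f} = of_bool P * measure_pmf.prob M {f. X f}"
  by (cases P) auto

lemma prob_const: "measure_pmf.prob M {f. P} = of_bool P"
  by (cases P) (auto simp: prob_UNIV')

definition cnt3 :: "(bool \<Rightarrow> bool \<Rightarrow> bool \<Rightarrow> bool) \<Rightarrow> real" where
  "cnt3 Q = (\<Sum>a\<in>UNIV. \<Sum>b\<in>UNIV. \<Sum>c\<in>UNIV. of_bool (Q a b c))"

lemma cnt3_eq: "cnt3 Q = of_bool (Q True True True) + of_bool (Q True True False) +
   of_bool (Q True False True) + of_bool (Q True False False) + of_bool (Q False True True) +
   of_bool (Q False True False) + of_bool (Q False False True) + of_bool (Q False False False)"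
  unfolding cnt3_def by (simp add: UNIV_bool)

lemma peel3:
  assumes "finite A" "c1 \<notin> A" "c2 \<notin> A" "c3 \<notin> A" "c1 \<noteq> c2" "c1 \<noteq> c3" "c2 \<noteq> c3"
    and inv: "\<And>f b. X (f(c1:=b)) = X f" "\<And>f b. X (f(c2:=b)) = X f" "\<And>f b. X (f(c3:=b)) = X f"
  shows "measure_pmf.prob (Pi_pmf (insert c1 (insert c2 (insert c3 A))) False (\<lambda>_. bernoulli_pmf (1/2)))
     {f. Q (f c1) (f c2) (f c3) \<and> X f} = cnt3 Q / 8 * measure_pmf.prob (Pi_pmf A False (\<lambda>_. bernoulli_pmf (1/2))) {f. X f}"
proof -
  have n: "c2 \<noteq> c1" "c3 \<noteq> c1" "c3 \<noteq> c2" using assms by auto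
  have f: "finite (insert c2 (insert c3 A))" "finite (insert c3 A)" using assms by auto
  have m: "c1 \<notin> insert c2 (insert c3 A)" "c2 \<notin> insert c3 A" using assms by auto
  show ?thesis
    apply (simp only: prob_ins[OF f(1) m(1)] prob_ins[OF f(2) m(2)] prob_ins[OF assms(1) assms(4)]
       mem_Collect_eq fun_upd_same fun_upd_other n assms(5-7) inv prob_conj_const not_False_eq_True
       simp_thms)
    apply (simp add: cnt3_eq field_simps)
    done
qed

lemma indep3:
  assumes "finite D" "c1 \<notin> D" "c2 \<notin> D" "c3 \<notin> D" "c1 \<noteq> c2" "c1 \<noteq> c3" "c2 \<noteq> c3"
  shows "measure_pmf.prob (Pi_pmf (insert c1 (insert c2 (insert c3 D))) False (\<lambda>_. bernoulli_pmf (1/2)))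
     {f. Q (f c1) (f c2) (f c3)} = cnt3 Q / 8"
  using peel3[OF assms, of "\<lambda>_. True" Q] by (simp add: prob_UNIV')

lemma indep6:
  assumes "finite D" "c1 \<notin> D" "c2 \<notin> D" "c3 \<notin> D" "c4 \<notin> D" "c5 \<notin> D" "c6 \<notin> D"
   "c1 \<noteq> c2" "c1 \<noteq> c3" "c1 \<noteq> c4" "c1 \<noteq> c5" "c1 \<noteq> c6"
   "c2 \<noteq> c3" "c2 \<noteq> c4" "c2 \<noteq> c5" "c2 \<noteq> c6"
   "c3 \<noteq> c4" "c3 \<noteq> c5" "c3 \<noteq> c6"
   "c4 \<noteq> c5" "c4 \<noteq> c6" "c5 \<noteq> c6"
  shows "measure_pmf.prob (Pi_pmf (insert c1 (insert c2 (insert c3 (insert c4 (insert c5 (insert c6 D))))))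
      False (\<lambda>_. bernoulli_pmf (1/2)))
     {f. Q (f c1) (f c2) (f c3) \<and> R (f c4) (f c5) (f c6)} = (cnt3 Q / 8) * (cnt3 R / 8)"
proof -
  have r: "measure_pmf.prob (Pi_pmf (insert c4 (insert c5 (insert c6 D)))
      False (\<lambda>_. bernoulli_pmf (1/2))) {f. R (f c4) (f c5) (f c6)} = cnt3 R / 8"
    by (rule indep3) (use assms in auto)
  have "measure_pmf.prob (Pi_pmf (insert c1 (insert c2 (insert c3 (insert c4 (insert c5 (insert c6 D))))))
      False (\<lambda>_. bernoulli_pmf (1/2)))
     {f. Q (f c1) (f c2) (f c3) \<and> (\<lambda>f. R (f c4) (f c5) (f c6)) f} = cnt3 Q / 8 *
     measure_pmf.prob (Pi_pmf (insert c4 (insert c5 (insert c6 D)))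
      False (\<lambda>_. bernoulli_pmf (1/2))) {f. (\<lambda>f. R (f c4) (f c5) (f c6)) f}"
    by (rule peel3) (use assms in \<open>auto simp: not_sym\<close>)
  then show ?thesis using r by simp
qed



definition cnt5 :: "(bool \<Rightarrow> bool \<Rightarrow> bool \<Rightarrow> bool \<Rightarrow> bool \<Rightarrow> bool) \<Rightarrow> real" where
  "cnt5 P = (\<Sum>a\<in>UNIV. \<Sum>b\<in>UNIV. \<Sum>c\<in>UNIV. \<Sum>d\<in>UNIV. \<Sum>e\<in>UNIV. of_bool (P a b c d e))"

lemma enum5:
  assumes "finite D" "c1 \<notin> D" "c2 \<notin> D" "c3 \<notin> D" "c4 \<notin> D" "c5 \<notin> D"
   "c1 \<noteq> c2" "c1 \<noteq> c3" "c1 \<noteq> c4" "c1 \<noteq> c5"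
   "c2 \<noteq> c3" "c2 \<noteq> c4" "c2 \<noteq> c5"
   "c3 \<noteq> c4" "c3 \<noteq> c5" "c4 \<noteq> c5"
  shows "measure_pmf.prob (Pi_pmf (insert c1 (insert c2 (insert c3 (insert c4 (insert c5 D)))))
      False (\<lambda>_. bernoulli_pmf (1/2)))
     {f. P (f c1) (f c2) (f c3) (f c4) (f c5)} = cnt5 P / 32"
proof -
  have n: "c2 \<noteq> c1" "c3 \<noteq> c1" "c4 \<noteq> c1" "c5 \<noteq> c1" "c3 \<noteq> c2" "c4 \<noteq> c2" "c5 \<noteq> c2"
    "c4 \<noteq> c3" "c5 \<noteq> c3" "c5 \<noteq> c4" using assms by auto
  have f: "finite (insert c2 (insert c3 (insert c4 (insert c5 D))))" "finite (insert c3 (insert c4 (insert c5 D)))"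
     "finite (insert c4 (insert c5 D))" "finite (insert c5 D)" using assms by auto
  have m: "c1 \<notin> insert c2 (insert c3 (insert c4 (insert c5 D)))" "c2 \<notin> insert c3 (insert c4 (insert c5 D))"
    "c3 \<notin> insert c4 (insert c5 D)" "c4 \<notin> insert c5 D" using assms by auto
  show ?thesis
    apply (simp only: prob_ins[OF f(1) m(1)] prob_ins[OF f(2) m(2)] prob_ins[OF f(3) m(3)]
       prob_ins[OF f(4) m(4)] prob_ins[OF assms(1) assms(6)]
       mem_Collect_eq fun_upd_same fun_upd_other n assms(7-16) prob_const not_False_eq_True)
    apply (simp add: cnt5_def UNIV_bool field_simps)
    done
qed

definition opc :: "bool \<Rightarrow> bool \<Rightarrow> bool \<Rightarrow> nat list" where
  "opc u v x = (let w = (if u = v then u else x) in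
   [1 + of_bool (\<not> u) + of_bool (\<not> w), 1 + of_bool u + of_bool (\<not> v), 1 + of_bool w + of_bool v])"

lemma gct_op_opc: "gct_op xi t = opc (xi (t, Suc t)) (xi (Suc t, Suc (Suc t))) (xi (t, Suc (Suc t)))"
  unfolding gct_op_closed opc_def by simp

lemma D4': "{(s,t). s<t \<and> t<(1+3::nat)} = insert (0,1) (insert (1,2) (insert (0,2) (insert (2,3) (insert (1,3) {(0,3)}))))" by auto

lemma gpp1_cnt: "gct_pp (1/2) i j 1 = cnt5 (\<lambda>a b c d e. opc a b c = op_pi i \<and> opc b d e = op_pi j) / 32"
proof -
  have "gct_pp (1/2) i j 1 = measure_pmf.prob (Pi_pmf (insert (0,1) (insert (1,2) (insert (0,2) (insert (2,3) (insert (1,3) {(0,3)})))))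
      False (\<lambda>_. bernoulli_pmf (1/2)))
     {f::nat\<times>nat\<Rightarrow>bool. (\<lambda>a b c d e. opc a b c = op_pi i \<and> opc b d e = op_pi j) (f (0,1)) (f (1,2)) (f (0,2)) (f (2,3)) (f (1,3))}"
    unfolding gct_pp_def coins_def D4' by (simp add: gct_op_opc numeral_eq_Suc)
  also have "\<dots> = cnt5 (\<lambda>a b c d e. opc a b c = op_pi i \<and> opc b d e = op_pi j) / 32"
    by (rule enum5) auto
  finally show ?thesis .
qed

lemma gpp1: "i \<in> {1..6} \<Longrightarrow> j \<in> {1..6} \<Longrightarrow> gct_pp (1/2) i j 1 =
  [[1/8,1/16,0,1/16,0,0],
   [0,0,1/32,0,1/32,1/16],
   [1/16,1/32,0,1/32,0,0],
   [0,0,1/32,0,1/32,1/16],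
   [1/16,1/32,0,1/32,0,0],
   [0,0,1/16,0,1/16,1/8]] ! (i - 1) ! (j - 1)"
  unfolding gpp1_cnt
  by (drule six, drule six, elim disjE; simp add: cnt5_def UNIV_bool opc_def op_pi_def)


lemma D3': "{(s,t). s<t \<and> t<(3::nat)} = insert (0,1) (insert (1,2) (insert (0,2) {}))" by auto

lemma gp_cnt: "gct_p (1/2) i = cnt3 (\<lambda>a b c. opc a b c = op_pi i) / 8"
proof -
  have "gct_p (1/2) i = measure_pmf.prob (Pi_pmf (insert (0,1) (insert (1,2) (insert (0,2) {})))
      False (\<lambda>_. bernoulli_pmf (1/2)))
     {f::nat\<times>nat\<Rightarrow>bool. (\<lambda>a b c. opc a b c = op_pi i) (f (0,1)) (f (1,2)) (f (0,2))}"
    unfolding gct_p_def coins_def D3' by (simp add: gct_op_opc numeral_eq_Suc)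
  also have "\<dots> = cnt3 (\<lambda>a b c. opc a b c = op_pi i) / 8"
    by (rule indep3) auto
  finally show ?thesis .
qed

lemma gpp2: "gct_pp (1/2) i j (Suc (Suc m)) = gct_p (1/2) i * gct_p (1/2) j"
proof -
  define D' where "D' = {(s,t). s<t \<and> t < Suc (Suc m) + 3} - {(0,1),(1,2),(0,2),
     (Suc (Suc m), Suc (Suc (Suc m))), (Suc (Suc (Suc m)), Suc (Suc (Suc (Suc m)))),
     (Suc (Suc m), Suc (Suc (Suc (Suc m))))}"
  have fin: "finite D'"
    by (rule finite_subset[of _ "{..<Suc (Suc m) + 3} \<times> {..<Suc (Suc m) + 3}"]) (auto simp: D'_def)
  have D: "{(s,t). s<t \<and> t < Suc (Suc m) + 3} = insert (0,1) (insert (1,2) (insert (0,2) (insert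
     (Suc (Suc m), Suc (Suc (Suc m))) (insert (Suc (Suc (Suc m)), Suc (Suc (Suc (Suc m))))
     (insert (Suc (Suc m), Suc (Suc (Suc (Suc m)))) D')))))"
    by (auto simp: D'_def)
  have "gct_pp (1/2) i j (Suc (Suc m)) = measure_pmf.prob (Pi_pmf (insert (0,1) (insert (1,2) (insert (0,2) (insert
     (Suc (Suc m), Suc (Suc (Suc m))) (insert (Suc (Suc (Suc m)), Suc (Suc (Suc (Suc m))))
     (insert (Suc (Suc m), Suc (Suc (Suc (Suc m)))) D')))))) False (\<lambda>_. bernoulli_pmf (1/2)))
     {f. (\<lambda>a b c. opc a b c = op_pi i) (f (0,1)) (f (1,2)) (f (0,2)) \<and>
         (\<lambda>a b c. opc a b c = op_pi j) (f (Suc (Suc m), Suc (Suc (Suc m))))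
            (f (Suc (Suc (Suc m)), Suc (Suc (Suc (Suc m))))) (f (Suc (Suc m), Suc (Suc (Suc (Suc m)))))}"
    unfolding gct_pp_def coins_def D by (simp add: gct_op_opc numeral_eq_Suc)
  also have "\<dots> = (cnt3 (\<lambda>a b c. opc a b c = op_pi i) / 8) * (cnt3 (\<lambda>a b c. opc a b c = op_pi j) / 8)"
    apply (rule indep6)
    apply (rule fin)
    apply (auto simp: D'_def)
    done
  finally show ?thesis by (simp add: gp_cnt)
qed

theorem corollary3p3:
  shows "(\<forall>i\<in>{1..6}. gct_p (1/2) i = [1/4, 1/8, 1/8, 1/8, 1/8, 1/4] ! (i - 1))
    \<and> (\<forall>i\<in>{1..6}. \<forall>j\<in>{1..6}.
          summable (\<lambda>k. gct_cov_term (1/2) i j (Suc k))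
        \<and> gct_sigma (1/2) i j =
            ([[20, -2, -2, -2, -2, -12],
              [-2, 5, 1, -3, 1, -2],
              [-2, 1, 5, 1, -3, -2],
              [-2, -3, 1, 5, 1, -2],
              [-2, 1, -3, 1, 5, -2],
              [-12, -2, -2, -2, -2, 20]] ! (i - 1) ! (j - 1)) / (64::real))"
proof -
  have B: "summable (\<lambda>k. gct_cov_term (1/2) i j (Suc k))
        \<and> gct_sigma (1/2) i j =
            ([[20, -2, -2, -2, -2, -12],
              [-2, 5, 1, -3, 1, -2],
              [-2, 1, 5, 1, -3, -2],
              [-2, -3, 1, 5, 1, -2],
              [-2, 1, -3, 1, 5, -2],
              [-12, -2, -2, -2, -2, 20]] ! (i - 1) ! (j - 1)) / (64::real)"
    if ij: "i \<in> {1..6}" "j \<in> {1..6}" for i j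
  proof -
    have z: "gct_cov_term (1/2) i j (Suc k) = 0" if "k \<notin> {0}" for k
    proof -
      from that obtain m where "k = Suc m" by (cases k) auto
      then show ?thesis by (simp add: gct_cov_term_def gpp2)
    qed
    have s: "(\<lambda>k. gct_cov_term (1/2) i j (Suc k)) sums gct_cov_term (1/2) i j 1"
      using sums_finite[of "{0}" "\<lambda>k. gct_cov_term (1/2) i j (Suc k)"] z by simp
    have sig: "gct_sigma (1/2) i j = gct_p (1/2) i * ((if i = j then 1 else 0) - gct_p (1/2) j)
        + gct_pp (1/2) i j 1 + gct_pp (1/2) j i 1 - 2 * gct_p (1/2) i * gct_p (1/2) j"
      unfolding gct_sigma_def using sums_unique[OF s] by (simp add: gct_cov_term_def)
    have "gct_sigma (1/2) i j =
            ([[20, -2, -2, -2, -2, -12],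
              [-2, 5, 1, -3, 1, -2],
              [-2, 1, 5, 1, -3, -2],
              [-2, -3, 1, 5, 1, -2],
              [-2, 1, -3, 1, 5, -2],
              [-12, -2, -2, -2, -2, 20]] ! (i - 1) ! (j - 1)) / (64::real)"
      unfolding sig gp[OF ij(1)] gp[OF ij(2)] gpp1[OF ij] gpp1[OF ij(2) ij(1)]
      using ij by (drule_tac six, drule_tac six, elim disjE; simp)
    then show ?thesis using s sums_summable by blast
  qed
  show ?thesis using gp B by blast
qed

end
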